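(* Let $\mathcal{I}$ and $\mathcal{J}$ be ideals. If $\mathcal{J}$ is a weak P-ideal and $\mathcal{J}\preceq\mathcal{I}$, then $\mathrm{FinBW}(\mathcal{I})\subseteq\mathrm{FinBW}(\mathcal{J})$.
   Context: An ideal on an infinite countable set $X$ is a family $\mathcal{I}\subseteq\mathcal{P}(X)$ closed under subsets and finite unions, containing all finite subsets, with $X\notin\mathcal{I}$. A space $X$ is in $\mathrm{FinBW}(\mathcal{I})$ if $X$ is Hausdorff and for every sequence $(x_n)_{n\in\bigcup\mathcal{I}}$ in $X$ there is $A\notin\mathcal{I}$ with $(x_n)_{n\in A}$ convergent in $X$. An ideal $\mathcal{I}$ on $X$ is a weak P-ideal if for every partition $(A_n)_{n\in\omega}$ of $X$ into sets from $\mathcal{I}$ there is $S\notin\mathcal{I}$ with $S\cap A_n$ finite for all $n$. $\mathrm{Fin}^2$: ideal on $\omega^2$ of all $A$ with only finitely many $n$ such that $\{m:(n,m)\in A\}$ is infinite. $\mathrm{Fin}\otimes\emptyset$: the family of $A\subseteq\omega^2$ with $A\subseteq F\times\omega$ for some finite $F$. If $(G_{i,j})_{(i,j)\in\omega^2}$ is a partition of $\bigcup\mathcal{I}$ (pieces may be empty) into sets from $\mathcal{I}$, then $\hat{\mathcal{I}}(G_{i,j})$ is the ideal on $\omega^2$ of all $A\subseteq\omega^2$ such that every $X\subseteq\bigcup_{(i,j)\in A}G_{i,j}$ with $X\cap G_{i,j}$ finite for all $(i,j)\in A$ belongs to $\mathcal{I}$. $\mathcal{J}\preceq\mathcal{I}$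 means: for every partition $(H_{i,j})\subseteq\mathcal{J}$ of $\bigcup\mathcal{J}$ with $\mathrm{Fin}\otimes\emptyset\subseteq\hat{\mathcal{J}}(H_{i,j})$ there is a partition $(G_{i,j})\subseteq\mathcal{I}$ of $\bigcup\mathcal{I}$ with $\hat{\mathcal{J}}(H_{i,j})\cap\mathrm{Fin}^2\subseteq\hat{\mathcal{I}}(G_{i,j})$. *)

theory Defs
  imports "HOL-Analysis.Analysis"
begin

definition ideal_on :: "'a set \<Rightarrow> 'a set set \<Rightarrow> bool" where
  "ideal_on X I \<longleftrightarrow> infinite X \<and> countable X \<and> I \<subseteq> Pow X \<and>
     (\<forall>A B. A \<in> I \<and> B \<subseteq> A \<longrightarrow> B \<in> I) \<and>
     (\<forall>A B. A \<in> I \<and> B \<in> I \<longrightarrow> A \<union> B \<in> I) \<and>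
     (\<forall>F. F \<subseteq> X \<and> finite F \<longrightarrow> F \<in> I) \<and> X \<notin> I"

definition ideal :: "'a set set \<Rightarrow> bool" where
  "ideal I \<longleftrightarrow> ideal_on (\<Union>I) I"

text \<open>A family of pieces indexed by \<open>'i\<close> is a partition of X into sets from I
  (pieces may be empty).\<close>
definition partition_in :: "'a set set \<Rightarrow> 'a set \<Rightarrow> ('i \<Rightarrow> 'a set) \<Rightarrow> bool" where
  "partition_in I X P \<longleftrightarrow> (\<forall>i j. i \<noteq> j \<longrightarrow> P i \<inter> P j = {}) \<and>
     (\<Union>i. P i) = X \<and> (\<forall>i. P i \<in> I)"

definition weak_P_ideal :: "'a set set \<Rightarrow> bool" where
  "weak_P_ideal I \<longleftrightarrow> (\<forall>A :: nat \<Rightarrow> 'a set. partition_in I (\<Union>I) A \<longrightarrow>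
     (\<exists>S. S \<subseteq> \<Union>I \<and> S \<notin> I \<and> (\<forall>n. finite (S \<inter> A n))))"

text \<open>Convergence of \<open>(x n)\<close> for \<open>n \<in> A\<close>: along the cofinite filter restricted to A.\<close>
definition FinBW :: "'a set set \<Rightarrow> 'c topology \<Rightarrow> bool" where
  "FinBW I T \<longleftrightarrow> Hausdorff_space T \<and>
     (\<forall>x :: 'a \<Rightarrow> 'c. (\<forall>n\<in>\<Union>I. x n \<in> topspace T) \<longrightarrow>
        (\<exists>A. A \<subseteq> \<Union>I \<and> A \<notin> I \<and> (\<exists>L. limitin T x L (inf cofinite (principal A)))))"

definition Fin2 :: "(nat \<times> nat) set set" where
  "Fin2 = {A. finite {n. infinite {m. (n, m) \<in> A}}}"

definition Fin_times_empty :: "(nat \<times> nat) set set" where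
  "Fin_times_empty = {A. \<exists>F. finite F \<and> A \<subseteq> F \<times> UNIV}"

definition hat_ideal :: "'a set set \<Rightarrow> (nat \<times> nat \<Rightarrow> 'a set) \<Rightarrow> (nat \<times> nat) set set" where
  "hat_ideal I G = {A. \<forall>Y. Y \<subseteq> (\<Union>p\<in>A. G p) \<and> (\<forall>p\<in>A. finite (Y \<inter> G p)) \<longrightarrow> Y \<in> I}"

definition ideal_preceq :: "'b set set \<Rightarrow> 'a set set \<Rightarrow> bool" where
  "ideal_preceq J I \<longleftrightarrow> (\<forall>H :: nat \<times> nat \<Rightarrow> 'b set.
     partition_in J (\<Union>J) H \<and> Fin_times_empty \<subseteq> hat_ideal J H \<longrightarrow>
     (\<exists>G :: nat \<times> nat \<Rightarrow> 'a set. partition_in I (\<Union>I) G \<and>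
        hat_ideal J H \<inter> Fin2 \<subseteq> hat_ideal I G))"

end

theory Submission
  imports Defs
begin

definition convS :: "'c topology \<Rightarrow> 'c set \<Rightarrow> 'c \<Rightarrow> bool" where
  "convS T W L \<longleftrightarrow> L \<in> topspace T \<and> (\<forall>U. openin T U \<and> L \<in> U \<longrightarrow> finite (W - U))"

lemma limitin_cof:
  "limitin T x L (inf cofinite (principal A)) \<longleftrightarrow>
     L \<in> topspace T \<and> (\<forall>U. openin T U \<and> L \<in> U \<longrightarrow> finite {n\<in>A. x n \<notin> U})"
  unfolding limitin_def eventually_inf_principal eventually_cofinite
  by (simp add: conj_commute)

lemma ideal_props:
  assumes "ideal I"
  shows "\<And>A B. A \<in> I \<Longrightarrow> B \<subseteq> A \<Longrightarrow> B \<in> I"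
    and "\<And>A B. A \<in> I \<Longrightarrow> B \<in> I \<Longrightarrow> A \<union> B \<in> I"
    and "\<And>F. F \<subseteq> \<Union>I \<Longrightarrow> finite F \<Longrightarrow> F \<in> I"
    and "\<Union>I \<notin> I" and "countable (\<Union>I)" and "infinite (\<Union>I)"
  using assms unfolding ideal_def ideal_on_def by blast+

lemma ideal_empty: "ideal I \<Longrightarrow> {} \<in> I"
  using ideal_props(3) by blast

lemma ideal_UN:
  assumes "ideal I" "finite F" "\<And>i. i \<in> F \<Longrightarrow> P i \<in> I"
  shows "(\<Union>i\<in>F. P i) \<in> I"
  using assms(2,3)
proof (induction F rule: finite_induct)
  case empty then show ?case using ideal_empty[OF assms(1)] by simp
next
  case (insert a F) then show ?case using ideal_props(2)[OF assms(1)] by simp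
qed

lemma conv_mono: "W' \<subseteq> W \<Longrightarrow> convS T W L \<Longrightarrow> convS T W' L"
  unfolding convS_def by (meson Diff_mono finite_subset order_refl)

lemma conv_unique:
  assumes H: "Hausdorff_space T" and "infinite W" "convS T W L1" "convS T W L2"
  shows "L1 = L2"
proof (rule ccontr)
  assume ne: "L1 \<noteq> L2"
  have "L1 \<in> topspace T" "L2 \<in> topspace T" using assms unfolding convS_def by auto
  then obtain U V where UV: "openin T U" "openin T V" "L1 \<in> U" "L2 \<in> V" "disjnt U V"
    using H ne unfolding Hausdorff_space_def by blast
  have "finite (W - U)" "finite (W - V)" using assms(3,4) UV unfolding convS_def by auto
  moreover have "W \<subseteq> (W - U) \<union> (W - V)" using UV(5) by (auto simp: disjnt_def)
  ultimately show False using assms(2) by (meson finite_UnI finite_subset)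
qed

lemma SC:
  assumes "ideal I" "FinBW I T" "W \<subseteq> topspace T" "countable W" "infinite W"
  shows "\<exists>W'\<subseteq>W. infinite W' \<and> (\<exists>L. convS T W' L)"
proof -
  let ?D = "\<Union>I"
  define g where "g = from_nat_into W \<circ> to_nat_on ?D"
  have b1: "bij_betw (to_nat_on ?D) ?D UNIV"
    using to_nat_on_infinite ideal_props(5,6)[OF assms(1)] by blast
  have b2: "bij_betw (from_nat_into W) UNIV W"
    using bij_betw_from_nat_into assms(4,5) by blast
  have bg: "bij_betw g ?D W" unfolding g_def using bij_betw_trans[OF b1 b2] .
  have "\<forall>n\<in>?D. g n \<in> topspace T" using bg assms(3) by (auto simp: bij_betw_def)
  then obtain B L where B: "B \<subseteq> ?D" "B \<notin> I" "limitin T g L (inf cofinite (principal B))"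
    using assms(2) unfolding FinBW_def by blast
  have infB: "infinite B" using B(1,2) ideal_props(3)[OF assms(1)] by blast
  have inj: "inj_on g B" using bg B(1) by (auto simp: bij_betw_def inj_on_subset)
  have "infinite (g ` B)" using infB inj finite_imageD by blast
  moreover have "g ` B \<subseteq> W" using bg B(1) by (auto simp: bij_betw_def)
  moreover have "convS T (g ` B) L"
    unfolding convS_def
  proof (intro conjI allI impI)
    show "L \<in> topspace T" using B(3) limitin_cof by metis
    fix U assume "openin T U \<and> L \<in> U"
    then have "finite {n\<in>B. g n \<notin> U}" using B(3) limitin_cof by metis
    moreover have "g ` B - U \<subseteq> g ` {n\<in>B. g n \<notin> U}" by auto
    ultimately show "finite (g ` B - U)" by (meson finite_imageI finite_subset)
  qed
  ultimately show ?thesis by blast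
qed

lemma subsing_finite: "(\<And>a b. a \<in> X \<Longrightarrow> b \<in> X \<Longrightarrow> a = b) \<Longrightarrow> finite X"
proof (cases "X = {}")
  case False
  assume h: "\<And>a b. a \<in> X \<Longrightarrow> b \<in> X \<Longrightarrow> a = b"
  from False obtain a where "a \<in> X" by blast
  then have "X \<subseteq> {a}" using h by blast
  then show ?thesis using finite_subset by blast
qed simp

theorem proposition10p1:
  fixes I :: "'a set set" and J :: "'b set set"
  assumes "ideal I" and "ideal J"
    and "weak_P_ideal J" and "ideal_preceq J I"
  shows "\<forall>T :: 'c topology. FinBW I T \<longrightarrow> FinBW J T"
proof (intro allI impI)
  fix T :: "'c topology" assume FI: "FinBW I T"
  have HT: "Hausdorff_space T" using FI unfolding FinBW_def by blast
  show "FinBW J T" unfolding FinBW_def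
  proof (intro conjI allI impI)
    show "Hausdorff_space T" by (rule HT)
    fix x :: "'b \<Rightarrow> 'c" assume xT: "\<forall>n\<in>\<Union>J. x n \<in> topspace T"
    show "\<exists>A. A \<subseteq> \<Union>J \<and> A \<notin> J \<and> (\<exists>L. limitin T x L (inf cofinite (principal A)))"
    proof (rule ccontr)
      assume bad0: "\<not> ?thesis"
      define D where "D = \<Union>J"
      have bad: "\<exists>U. openin T U \<and> L \<in> U \<and> infinite {n\<in>A. x n \<notin> U}"
        if "A \<subseteq> D" "A \<notin> J" "L \<in> topspace T" for A L
      proof (rule ccontr)
        assume "\<not> (\<exists>U. openin T U \<and> L \<in> U \<and> infinite {n\<in>A. x n \<notin> U})"
        then have "\<forall>U. openin T U \<and> L \<in> U \<longrightarrow> finite {n\<in>A. x n \<notin> U}" by blast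
        then have "limitin T x L (inf cofinite (principal A))"
          unfolding limitin_cof using that(3) by blast
        then show False using bad0 that(1,2) unfolding D_def by blast
      qed
      have infJ: "infinite A" if "A \<subseteq> D" "A \<notin> J" for A
        using that ideal_props(3)[OF assms(2)] unfolding D_def by blast
      define fib where "fib v = {d\<in>D. x d = v}" for v
      have fibJ: "fib v \<in> J" for v
      proof (cases "fib v = {}")
        case True then show ?thesis using ideal_empty[OF assms(2)] by simp
      next
        case False
        then obtain d where "d \<in> D" "x d = v" unfolding fib_def by blast
        then have vT: "v \<in> topspace T" using xT D_def by blast
        show ?thesis
        proof (rule ccontr)
          assume "fib v \<notin> J"
          then obtain U where "infinite {n\<in>fib v. x n \<notin> U}" "openin T U" "v \<in> U"
            using bad[of "fib v" v] vT unfolding fib_def by blast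
          moreover have "{n\<in>fib v. x n \<notin> U} = {}" using \<open>v \<in> U\<close> unfolding fib_def by auto
          ultimately show False by simp
        qed
      qed
      define V where "V = x ` D"
      have cD: "countable D" using ideal_props(5)[OF assms(2)] D_def by simp
      have cV: "countable V" unfolding V_def using cD by simp
      have VT: "V \<subseteq> topspace T" unfolding V_def D_def using xT by blast
      define Pn where "Pn n = {d\<in>D. to_nat_on V (x d) = n}" for n
      have partP: "partition_in J (\<Union>J) Pn"
        unfolding partition_in_def
      proof (intro conjI allI impI)
        fix i j :: nat assume "i \<noteq> j" then show "Pn i \<inter> Pn j = {}" unfolding Pn_def by auto
      next
        show "(\<Union>i. Pn i) = \<Union>J" unfolding Pn_def D_def by auto
      next
        fix n
        have "Pn n \<subseteq> fib (from_nat_into V n)"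
        proof
          fix d assume "d \<in> Pn n"
          then have d: "d \<in> D" "to_nat_on V (x d) = n" unfolding Pn_def by auto
          then have "x d \<in> V" unfolding V_def by blast
          then have "from_nat_into V n = x d" using d(2) cV from_nat_into_to_nat_on by metis
          then show "d \<in> fib (from_nat_into V n)" using d(1) unfolding fib_def by simp
        qed
        then show "Pn n \<in> J" using fibJ ideal_props(1)[OF assms(2)] by blast
      qed
      have wp: "\<forall>A::nat\<Rightarrow>'b set. partition_in J (\<Union>J) A \<longrightarrow>
          (\<exists>S. S \<subseteq> \<Union>J \<and> S \<notin> J \<and> (\<forall>n. finite (S \<inter> A n)))"
        using assms(3) unfolding weak_P_ideal_def by simp
      obtain S where S0: "S \<subseteq> \<Union>J" "S \<notin> J" "\<forall>n. finite (S \<inter> Pn n)"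
        using wp[rule_format, OF partP] by blast
      have S: "S \<subseteq> D" "S \<notin> J" "\<And>n. finite (S \<inter> Pn n)"
        using S0 unfolding D_def by auto
      have ftoo: "finite S'" if "S' \<subseteq> S" "finite (x ` S')" for S'
      proof -
        have "S' \<subseteq> (\<Union>v\<in>x ` S'. S \<inter> Pn (to_nat_on V v))"
          using that(1) S(1) unfolding Pn_def by blast
        moreover have "finite (\<Union>v\<in>x ` S'. S \<inter> Pn (to_nat_on V v))"
          using that(2) S(3) by (intro finite_UN_I) auto
        ultimately show ?thesis by (rule finite_subset)
      qed
      have sc2: "\<exists>W\<subseteq>x ` S3. infinite W \<and> (\<exists>L. convS T W L)" if "S3 \<subseteq> S" "infinite S3" for S3
      proof -
        have s3D: "S3 \<subseteq> D" using that(1) S(1) by (rule order_trans)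
        have t: "x ` S3 \<subseteq> topspace T" using s3D VT unfolding V_def by auto
        have c: "countable (x ` S3)" using countable_subset[OF s3D cD] by simp
        have i: "infinite (x ` S3)" using ftoo[OF that(1)] that(2) by blast
        show ?thesis using SC[OF assms(1) FI t c i] .
      qed
      have claim: "\<forall>S'. S' \<subseteq> S \<and> S' \<notin> J \<longrightarrow> (\<exists>W L. W \<subseteq> x ` S' \<and> infinite W \<and> convS T W L \<and> L \<notin> F)"
        if "finite F" for F :: "'c set"
        using that
      proof (induction F rule: finite_induct)
        case empty
        show ?case
        proof (intro allI impI)
          fix S' assume "S' \<subseteq> S \<and> S' \<notin> J"
          then have "S' \<subseteq> S" "infinite S'" using infJ S(1) by blast+
          then show "\<exists>W L. W \<subseteq> x ` S' \<and> infinite W \<and> convS T W L \<and> L \<notin> {}"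
            using sc2 by blast
        qed
      next
        case (insert M F)
        show ?case
        proof (intro allI impI)
          fix S' assume S': "S' \<subseteq> S \<and> S' \<notin> J"
          show "\<exists>W L. W \<subseteq> x ` S' \<and> infinite W \<and> convS T W L \<and> L \<notin> insert M F"
          proof (cases "M \<in> topspace T")
            case False
            obtain W L where W: "W \<subseteq> x ` S'" "infinite W" "convS T W L" "L \<notin> F"
              using insert.IH S' by blast
            have "L \<noteq> M" using W(3) False unfolding convS_def by auto
            then show ?thesis using W by blast
          next
            case True
            have "compactin T {M}" using True by simp
            moreover have "compactin T (F \<inter> topspace T)"
              using insert.hyps(1) by (simp add: finite_imp_compactin)
            moreover have "disjnt {M} (F \<inter> topspace T)" using insert.hyps(2) by (simp add: disjnt_def)
            ultimately obtain U Ov where UO: "openin T U" "openin T Ov" "{M} \<subseteq> U"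
              "F \<inter> topspace T \<subseteq> Ov" "disjnt U Ov"
              by (rule Hausdorff_space_compact_separation[OF HT])
            define S1 where "S1 = {d\<in>S'. x d \<notin> U}"
            define S2 where "S2 = {d\<in>S'. x d \<in> U}"
            have "S' = S1 \<union> S2" unfolding S1_def S2_def by auto
            have "S1 \<notin> J \<or> S2 \<notin> J"
            proof (rule ccontr)
              assume "\<not> (S1 \<notin> J \<or> S2 \<notin> J)"
              then have "S1 \<union> S2 \<in> J" using ideal_props(2)[OF assms(2)] by blast
              then show False using S' \<open>S' = S1 \<union> S2\<close> by simp
            qed
            then show ?thesis
            proof
              assume "S1 \<notin> J"
              moreover have "S1 \<subseteq> S" using S' S1_def by auto
              ultimately obtain W L where W: "W \<subseteq> x ` S1" "infinite W" "convS T W L" "L \<notin> F"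
                using insert.IH by blast
              have "L \<noteq> M"
              proof
                assume "L = M"
                then have "finite (W - U)" using W(3) UO unfolding convS_def by blast
                moreover have "W - U = W" using W(1) unfolding S1_def by auto
                ultimately show False using W(2) by simp
              qed
              moreover have "W \<subseteq> x ` S'" using W(1) S1_def by auto
              ultimately show ?thesis using W by blast
            next
              assume S2J: "S2 \<notin> J"
              have "S2 \<subseteq> D" using S' S(1) S2_def by auto
              then obtain U' where U': "openin T U'" "M \<in> U'" "infinite {n\<in>S2. x n \<notin> U'}"
                using bad[of S2 M] S2J True by blast
              have "{n\<in>S2. x n \<notin> U'} \<subseteq> S" using S' S2_def by auto
              then obtain W L where W: "W \<subseteq> x ` {n\<in>S2. x n \<notin> U'}" "infinite W" "convS T W L"
                using sc2 U'(3) by blast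
              have "L \<noteq> M"
              proof
                assume "L = M"
                then have "finite (W - U')" using W(3) U' unfolding convS_def by blast
                moreover have "W - U' = W" using W(1) by auto
                ultimately show False using W(2) by simp
              qed
              moreover have "L \<notin> F"
              proof
                assume "L \<in> F"
                then have "L \<in> Ov" using W(3) UO(4) unfolding convS_def by blast
                then have "finite (W - Ov)" using W(3) UO(2) unfolding convS_def by blast
                moreover have "W - Ov = W" using W(1) UO(5) unfolding S2_def disjnt_def by auto
                ultimately show False using W(2) by simp
              qed
              moreover have "W \<subseteq> x ` S'" using W(1) S2_def by auto
              ultimately show ?thesis using W by blast
            qed
          qed
        qed
      qed
      have Sinf: "infinite S" using infJ S(1,2) by blast
      have Vinf: "infinite V"
      proof
        assume fV: "finite V"
        have "x ` S \<subseteq> V" using S(1) unfolding V_def by blast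
        then have "finite (x ` S)" using fV by (rule finite_subset)
        then show False using ftoo[OF order_refl] Sinf by blast
      qed
      define Lim where "Lim = {L. \<exists>W. W \<subseteq> V \<and> infinite W \<and> convS T W L}"
      have Liminf: "infinite Lim"
      proof
        assume fl: "finite Lim"
        obtain W L where W: "W \<subseteq> x ` S" "infinite W" "convS T W L" "L \<notin> Lim"
          using claim[OF fl] S(1,2) by blast
        have "W \<subseteq> V" using W(1) S(1) unfolding V_def by blast
        then have "L \<in> Lim" using W(2,3) unfolding Lim_def by blast
        then show False using W(4) by blast
      qed
      obtain M :: "nat \<Rightarrow> 'c" where M: "inj M" "range M \<subseteq> Lim"
        using infinite_countable_subset[OF Liminf] by blast
      have "\<forall>i. \<exists>W. W \<subseteq> V \<and> infinite W \<and> convS T W (M i)"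
        using M(2) unfolding Lim_def by blast
      then obtain Wc where Wc0: "\<forall>i. Wc i \<subseteq> V \<and> infinite (Wc i) \<and> convS T (Wc i) (M i)"
        using choice[of "\<lambda>i W. W \<subseteq> V \<and> infinite W \<and> convS T W (M i)"] by blast
      have Wc: "\<And>i. Wc i \<subseteq> V" "\<And>i. infinite (Wc i)" "\<And>i. convS T (Wc i) (M i)"
        using Wc0 by blast+
      have finint: "finite (Wc i \<inter> Wc l)" if "i \<noteq> l" for i l
      proof (rule ccontr)
        assume inf: "infinite (Wc i \<inter> Wc l)"
        have c1: "convS T (Wc i \<inter> Wc l) (M i)" using conv_mono[OF Int_lower1 Wc(3)] .
        have c2: "convS T (Wc i \<inter> Wc l) (M l)" using conv_mono[OF Int_lower2 Wc(3)] .
        have "M i = M l" using conv_unique[OF HT inf c1 c2] .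
        then show False using M(1) that by (metis injD)
      qed
      define W2 where "W2 i = Wc i - (\<Union>l\<in>{..<i}. Wc l)" for i
      have W2inf: "infinite (W2 i)" for i
      proof
        assume f2: "finite (W2 i)"
        have f3: "finite (\<Union>l\<in>{..<i}. Wc i \<inter> Wc l)" using finint by (intro finite_UN_I) auto
        have "Wc i \<subseteq> W2 i \<union> (\<Union>l\<in>{..<i}. Wc i \<inter> Wc l)" unfolding W2_def by blast
        moreover have "finite (W2 i \<union> (\<Union>l\<in>{..<i}. Wc i \<inter> Wc l))" using f2 f3 by simp
        ultimately have "finite (Wc i)" by (rule finite_subset)
        then show False using Wc(2) by blast
      qed
      have W2V: "W2 i \<subseteq> V" for i using Wc(1) unfolding W2_def by blast
      have W2c: "convS T (W2 i) (M i)" for i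
        using conv_mono[OF _ Wc(3)[of i], of "W2 i"] unfolding W2_def by blast
      have W2disj: "W2 i \<inter> W2 l = {}" if "i \<noteq> l" for i l
      proof (cases "i < l")
        case True then show ?thesis unfolding W2_def by auto
      next
        case False then have "l < i" using that by simp
        then show ?thesis unfolding W2_def by auto
      qed
      have cW2: "countable (W2 i)" for i using W2V cV countable_subset by blast
      define \<sigma> where "\<sigma> i = from_nat_into (W2 i)" for i
      have \<sigma>b: "bij_betw (\<sigma> i) UNIV (W2 i)" for i
        unfolding \<sigma>_def using bij_betw_from_nat_into[OF cW2 W2inf] .
      have \<sigma>inj: "inj (\<sigma> i)" for i using \<sigma>b unfolding bij_betw_def by blast
      have \<sigma>W: "\<sigma> i j \<in> W2 i" for i j using \<sigma>b unfolding bij_betw_def by blast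
      define v where "v = from_nat_into V"
      have vb: "bij_betw v UNIV V" unfolding v_def using bij_betw_from_nat_into[OF cV Vinf] .
      have vinj: "inj v" using vb unfolding bij_betw_def by blast
      have vV: "v i \<in> V" for i using vb unfolding bij_betw_def by blast
      define u where "u p = (if snd p = 0 then v (fst p) else \<sigma> (fst p) (snd p - 1))" for p
      define H where "H p = (if snd p = 0 then fib (v (fst p)) else {})" for p :: "nat \<times> nat"
      have uT: "u p \<in> topspace T" for p
      proof -
        have "\<sigma> (fst p) (snd p - 1) \<in> V" using \<sigma>W W2V by blast
        moreover have "v (fst p) \<in> V" by (rule vV)
        ultimately have "u p \<in> V" unfolding u_def by simp
        then show ?thesis using VT by blast
      qed
      have Hx: "x d = u p" if "d \<in> H p" for d p
        using that unfolding H_def u_def fib_def by (auto split: if_splits)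
      have HD: "H p \<subseteq> D" for p unfolding H_def fib_def by auto
      have partH: "partition_in J (\<Union>J) H"
        unfolding partition_in_def
      proof (intro conjI allI impI)
        fix p q :: "nat \<times> nat" assume pq: "p \<noteq> q"
        show "H p \<inter> H q = {}"
        proof (cases "snd p = 0 \<and> snd q = 0")
          case True
          then have "fst p \<noteq> fst q" using pq by (simp add: prod_eq_iff)
          then have "v (fst p) \<noteq> v (fst q)" using vinj by (metis injD)
          then show ?thesis using True unfolding H_def fib_def by auto
        next
          case False then show ?thesis unfolding H_def by auto
        qed
      next
        show "(\<Union>p. H p) = \<Union>J"
        proof
          show "(\<Union>p. H p) \<subseteq> \<Union>J" using HD unfolding D_def by blast
          show "\<Union>J \<subseteq> (\<Union>p. H p)"
          proof
            fix d assume d: "d \<in> \<Union>J"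
            then have "x d \<in> V" unfolding V_def D_def by blast
            then have "v (to_nat_on V (x d)) = x d" unfolding v_def using cV by simp
            then have "d \<in> H (to_nat_on V (x d), 0)" using d unfolding H_def fib_def D_def by simp
            then show "d \<in> (\<Union>p. H p)" by blast
          qed
        qed
      next
        fix p show "H p \<in> J" unfolding H_def using fibJ ideal_empty[OF assms(2)] by simp
      qed
      have FinH: "Fin_times_empty \<subseteq> hat_ideal J H"
      proof
        fix A assume "A \<in> Fin_times_empty"
        then obtain F where F: "finite F" "A \<subseteq> F \<times> UNIV" unfolding Fin_times_empty_def by blast
        have UF: "(\<Union>i\<in>F. fib (v i)) \<in> J" by (rule ideal_UN[OF assms(2) F(1)]) (rule fibJ)
        have sub: "(\<Union>p\<in>A. H p) \<subseteq> (\<Union>i\<in>F. fib (v i))"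
        proof
          fix d assume "d \<in> (\<Union>p\<in>A. H p)"
          then obtain p where p: "p \<in> A" "d \<in> H p" by blast
          then have "fst p \<in> F" using F(2) by auto
          then show "d \<in> (\<Union>i\<in>F. fib (v i))" using p(2) unfolding H_def by (auto split: if_splits)
        qed
        show "A \<in> hat_ideal J H" unfolding hat_ideal_def
        proof (intro CollectI allI impI)
          fix Y assume "Y \<subseteq> (\<Union>p\<in>A. H p) \<and> (\<forall>p\<in>A. finite (Y \<inter> H p))"
          then have "Y \<subseteq> (\<Union>i\<in>F. fib (v i))" using sub by blast
          then show "Y \<in> J" using ideal_props(1)[OF assms(2) UF] by blast
        qed
      qed
      have pre: "\<forall>H::nat \<times> nat \<Rightarrow> 'b set. partition_in J (\<Union>J) H \<and> Fin_times_empty \<subseteq> hat_ideal J H \<longrightarrow>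
          (\<exists>G::nat \<times> nat \<Rightarrow> 'a set. partition_in I (\<Union>I) G \<and> hat_ideal J H \<inter> Fin2 \<subseteq> hat_ideal I G)"
        using assms(4) unfolding ideal_preceq_def by simp
      obtain G :: "nat \<times> nat \<Rightarrow> 'a set" where partG: "partition_in I (\<Union>I) G"
        and incl: "hat_ideal J H \<inter> Fin2 \<subseteq> hat_ideal I G"
        using pre[rule_format, OF conjI[OF partH FinH]] by blast
      have Gdisj: "G p \<inter> G q = {}" if "p \<noteq> q" for p q
        using partG that unfolding partition_in_def by blast
      have GU: "(\<Union>p. G p) = \<Union>I" using partG unfolding partition_in_def by blast
      have GI: "G p \<in> I" for p using partG unfolding partition_in_def by blast
      define pos where "pos n = (SOME p. n \<in> G p)" for n
      have posG: "n \<in> G (pos n)" if "n \<in> \<Union>I" for n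
      proof -
        have "\<exists>p. n \<in> G p" using that GU by blast
        then show ?thesis unfolding pos_def by (rule someI_ex)
      qed
      have posU: "pos n = p" if "n \<in> G p" for n p
      proof (rule ccontr)
        assume "pos n \<noteq> p"
        moreover have "n \<in> G (pos n)" using posG that GU by blast
        ultimately show False using Gdisj that by blast
      qed
      define y where "y n = u (pos n)" for n
      have yG: "y n = u p" if "n \<in> G p" for n p using posU[OF that] unfolding y_def by simp
      have "\<forall>n\<in>\<Union>I. y n \<in> topspace T" using uT unfolding y_def by blast
      then have "\<exists>B. B \<subseteq> \<Union>I \<and> B \<notin> I \<and> (\<exists>L. limitin T y L (inf cofinite (principal B)))"
        using FI[unfolded FinBW_def, THEN conjunct2, rule_format, of y] by blast
      then obtain B L where B: "B \<subseteq> \<Union>I" "B \<notin> I" "limitin T y L (inf cofinite (principal B))"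
        by blast
      have LT: "L \<in> topspace T" using B(3) unfolding limitin_cof by blast
      have convB: "finite {n\<in>B. y n \<notin> U}" if "openin T U" "L \<in> U" for U
        using B(3) that unfolding limitin_cof by blast
      define PL where "PL = {p. u p = L}"
      have PLfin: "finite PL"
      proof -
        have f1: "finite {p\<in>PL. snd p = 0}"
        proof (rule subsing_finite)
          fix a b assume "a \<in> {p\<in>PL. snd p = 0}" "b \<in> {p\<in>PL. snd p = 0}"
          then have "v (fst a) = v (fst b)" "snd a = 0" "snd b = 0" unfolding PL_def u_def by auto
          then have "fst a = fst b" using injD[OF vinj] by blast
          then show "a = b" using \<open>snd a = 0\<close> \<open>snd b = 0\<close> by (simp add: prod_eq_iff)
        qed
        have f2: "finite {p\<in>PL. snd p \<noteq> 0}"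
        proof (rule subsing_finite)
          fix a b assume "a \<in> {p\<in>PL. snd p \<noteq> 0}" "b \<in> {p\<in>PL. snd p \<noteq> 0}"
          then have e: "\<sigma> (fst a) (snd a - 1) = \<sigma> (fst b) (snd b - 1)"
            and nz: "snd a \<noteq> 0" "snd b \<noteq> 0" unfolding PL_def u_def by auto
          have fa: "fst a = fst b"
          proof (rule ccontr)
            assume "fst a \<noteq> fst b"
            then have "W2 (fst a) \<inter> W2 (fst b) = {}" by (rule W2disj)
            then show False using e \<sigma>W[of "fst a" "snd a - 1"] \<sigma>W[of "fst b" "snd b - 1"] by auto
          qed
          then have e': "\<sigma> (fst b) (snd a - 1) = \<sigma> (fst b) (snd b - 1)" using e by simp
          have "snd a - 1 = snd b - 1" using injD[OF \<sigma>inj e'] .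
          then have "snd a = snd b" using nz by arith
          then show "a = b" using fa by (simp add: prod_eq_iff)
        qed
        have "PL = {p\<in>PL. snd p = 0} \<union> {p\<in>PL. snd p \<noteq> 0}" by blast
        moreover have "finite ({p\<in>PL. snd p = 0} \<union> {p\<in>PL. snd p \<noteq> 0})" using f1 f2 by simp
        ultimately show ?thesis by simp
      qed
      define B' where "B' = B - (\<Union>p\<in>PL. G p)"
      have B'I: "B' \<notin> I"
      proof
        assume "B' \<in> I"
        moreover have "(\<Union>p\<in>PL. G p) \<in> I" by (rule ideal_UN[OF assms(1) PLfin]) (rule GI)
        ultimately have "B' \<union> (\<Union>p\<in>PL. G p) \<in> I" using ideal_props(2)[OF assms(1)] by blast
        moreover have "B \<subseteq> B' \<union> (\<Union>p\<in>PL. G p)" unfolding B'_def by blast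
        ultimately show False using B(2) ideal_props(1)[OF assms(1)] by blast
      qed
      have B'fin: "finite (B' \<inter> G p)" for p
      proof (cases "p \<in> PL")
        case True then have "B' \<inter> G p = {}" unfolding B'_def by blast
        then show ?thesis by simp
      next
        case False
        then have ne: "L \<noteq> u p" unfolding PL_def by auto
        have "\<exists>U1 U2. openin T U1 \<and> openin T U2 \<and> L \<in> U1 \<and> u p \<in> U2 \<and> disjnt U1 U2"
          using HT[unfolded Hausdorff_space_def, rule_format, of L "u p"] LT uT[of p] ne by blast
        then obtain U1 U2 where U: "openin T U1" "openin T U2" "L \<in> U1" "u p \<in> U2" "disjnt U1 U2"
          by blast
        have "B' \<inter> G p \<subseteq> {n\<in>B. y n \<notin> U1}"
        proof
          fix n assume n: "n \<in> B' \<inter> G p"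
          then have "y n = u p" using yG by blast
          then have "y n \<notin> U1" using U(4,5) by (auto simp: disjnt_def)
          then show "n \<in> {n\<in>B. y n \<notin> U1}" using n unfolding B'_def by blast
        qed
        then show ?thesis using convB[OF U(1,3)] finite_subset by blast
      qed
      define A where "A = {p. B' \<inter> G p \<noteq> {}}"
      have B'sub: "B' \<subseteq> (\<Union>p\<in>A. G p)"
      proof
        fix n assume n: "n \<in> B'"
        then have "n \<in> \<Union>I" using B(1) unfolding B'_def by blast
        then have "n \<in> G (pos n)" by (rule posG)
        then show "n \<in> (\<Union>p\<in>A. G p)" using n unfolding A_def by blast
      qed
      have AnotI: "A \<notin> hat_ideal I G"
      proof
        assume "A \<in> hat_ideal I G"
        then have "\<forall>Y. Y \<subseteq> (\<Union>p\<in>A. G p) \<and> (\<forall>p\<in>A. finite (Y \<inter> G p)) \<longrightarrow> Y \<in> I"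
          unfolding hat_ideal_def by simp
        then have "B' \<in> I" using B'sub B'fin by blast
        then show False using B'I by blast
      qed
      have convA: "finite {p\<in>A. u p \<notin> U}" if "openin T U" "L \<in> U" for U
      proof -
        define c where "c p = (SOME n. n \<in> B' \<inter> G p)" for p
        have cin: "c p \<in> B' \<inter> G p" if "p \<in> A" for p
        proof -
          from that obtain n where "n \<in> B' \<inter> G p" unfolding A_def by blast
          then show ?thesis unfolding c_def by (rule someI)
        qed
        have "inj_on c {p\<in>A. u p \<notin> U}"
        proof (rule inj_onI)
          fix p q assume pq: "p \<in> {p\<in>A. u p \<notin> U}" "q \<in> {p\<in>A. u p \<notin> U}" "c p = c q"
          have "c p \<in> G p" using cin pq(1) by blast
          moreover have "c p \<in> G q" using cin pq(2,3) by (metis Int_iff mem_Collect_eq)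
          ultimately show "p = q" using posU[of "c p" p] posU[of "c p" q] by simp
        qed
        moreover have "c ` {p\<in>A. u p \<notin> U} \<subseteq> {n\<in>B. y n \<notin> U}"
        proof
          fix n assume "n \<in> c ` {p\<in>A. u p \<notin> U}"
          then obtain p where p: "p \<in> A" "u p \<notin> U" "n = c p" by blast
          then have "n \<in> B' \<inter> G p" using cin by blast
          moreover have "y n = u p" using yG \<open>n \<in> B' \<inter> G p\<close> by blast
          ultimately show "n \<in> {n\<in>B. y n \<notin> U}" using p(2) unfolding B'_def by auto
        qed
        then have "finite (c ` {p\<in>A. u p \<notin> U})" using convB[OF that] finite_subset by blast
        ultimately show ?thesis using finite_imageD by blast
      qed
      have AFin2: "A \<in> Fin2"
      proof -
        have "{i. infinite {j. (i,j) \<in> A}} \<subseteq> {i. M i = L}"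
        proof
          fix i assume "i \<in> {i. infinite {j. (i,j) \<in> A}}"
          then have infrow: "infinite {j. (i,j) \<in> A}" by simp
          define R where "R = {j. (i, Suc j) \<in> A}"
          have "{j. (i,j) \<in> A} \<subseteq> insert 0 (Suc ` R)"
          proof
            fix j assume "j \<in> {j. (i,j) \<in> A}"
            then show "j \<in> insert 0 (Suc ` R)" unfolding R_def by (cases j) auto
          qed
          then have Rinf: "infinite R"
          proof -
            assume sub: "{j. (i,j) \<in> A} \<subseteq> insert 0 (Suc ` R)"
            show "infinite R"
            proof
              assume "finite R"
              then have "finite (insert 0 (Suc ` R))" by simp
              then show False using sub infrow finite_subset by blast
            qed
          qed
          have uR: "u (i, Suc j) = \<sigma> i j" for j unfolding u_def by simp
          define W' where "W' = \<sigma> i ` R"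
          have injR: "inj_on (\<sigma> i) R" using \<sigma>inj[of i] by (rule inj_on_subset) simp
          have W'inf: "infinite W'" unfolding W'_def
            using Rinf finite_imageD[OF _ injR] by blast
          have "W' \<subseteq> W2 i" unfolding W'_def using \<sigma>W by blast
          then have c1: "convS T W' (M i)" by (rule conv_mono[OF _ W2c])
          have c2: "convS T W' L" unfolding convS_def
          proof (intro conjI allI impI)
            show "L \<in> topspace T" by (rule LT)
            fix U assume U: "openin T U \<and> L \<in> U"
            have im: "(\<lambda>j. (i, Suc j)) ` {j\<in>R. \<sigma> i j \<notin> U} \<subseteq> {p\<in>A. u p \<notin> U}"
              using uR unfolding R_def by auto
            have ij: "inj_on (\<lambda>j. (i, Suc j)) {j\<in>R. \<sigma> i j \<notin> U}" by (auto intro: inj_onI)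
            have "finite ((\<lambda>j. (i, Suc j)) ` {j\<in>R. \<sigma> i j \<notin> U})"
              using convA[of U] U im finite_subset by blast
            then have fR: "finite {j\<in>R. \<sigma> i j \<notin> U}" using ij finite_imageD by blast
            have "W' - U \<subseteq> \<sigma> i ` {j\<in>R. \<sigma> i j \<notin> U}" unfolding W'_def by auto
            moreover have "finite (\<sigma> i ` {j\<in>R. \<sigma> i j \<notin> U})" using fR by simp
            ultimately show "finite (W' - U)" by (rule finite_subset)
          qed
          show "i \<in> {i. M i = L}" using conv_unique[OF HT W'inf c1 c2] by simp
        qed
        moreover have "finite {i. M i = L}"
        proof (rule subsing_finite)
          fix a b assume "a \<in> {i. M i = L}" "b \<in> {i. M i = L}"
          then have "M a = M b" by simp
          then show "a = b" by (rule injD[OF M(1)])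
        qed
        ultimately show ?thesis unfolding Fin2_def using finite_subset by blast
      qed
      have "A \<notin> hat_ideal J H" using incl AnotI AFin2 by blast
      then have "\<not> (\<forall>Y. Y \<subseteq> (\<Union>p\<in>A. H p) \<and> (\<forall>p\<in>A. finite (Y \<inter> H p)) \<longrightarrow> Y \<in> J)"
        unfolding hat_ideal_def by simp
      then obtain Z where Z: "Z \<subseteq> (\<Union>p\<in>A. H p)" "\<forall>p\<in>A. finite (Z \<inter> H p)" "Z \<notin> J"
        by blast
      have ZD: "Z \<subseteq> D" using Z(1) HD by blast
      obtain U where U: "openin T U" "L \<in> U" "infinite {n\<in>Z. x n \<notin> U}"
        using bad[OF ZD Z(3) LT] by blast
      have "{n\<in>Z. x n \<notin> U} \<subseteq> (\<Union>p\<in>{p\<in>A. u p \<notin> U}. Z \<inter> H p)"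
      proof
        fix n assume n: "n \<in> {n\<in>Z. x n \<notin> U}"
        then obtain p where p: "p \<in> A" "n \<in> H p" using Z(1) by blast
        then have "x n = u p" using Hx by blast
        then have "p \<in> {p\<in>A. u p \<notin> U}" using n p(1) by simp
        moreover have "n \<in> Z \<inter> H p" using n p(2) by simp
        ultimately show "n \<in> (\<Union>p\<in>{p\<in>A. u p \<notin> U}. Z \<inter> H p)" by blast
      qed
      moreover have "finite (\<Union>p\<in>{p\<in>A. u p \<notin> U}. Z \<inter> H p)"
        using convA[OF U(1,2)] Z(2) by (intro finite_UN_I) auto
      ultimately show False using U(3) finite_subset by blast
    qed
  qed
qed

end
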